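(* Let $M,N$ be matroids on a common set $E$ and $W:=W(M,N)$. Then every element of $B(M,N,W)$ is a nice feasible set (with respect to $(M,N)$).
   Context: Matroids are possibly infinite. $M^*$ dual, $M\upharpoonright X$ restriction, $M/X:=(M^*\upharpoonright(E\setminus X))^*$ (on $E\setminus X$), $M.X:=M/(E\setminus X)$. A loop is an element $e$ with $\{e\}$ dependent; $r(K)=0$ means the empty set is a base of $K$. $W$ is an $(M,N)$-wave if $M\upharpoonright W$ has a base independent in $N.W$; the union of all waves is a wave, denoted $W(M,N)$. $B(M,N,X)$ is the set of common bases of $M\upharpoonright X$ and $N.X$. $\mathsf{cond}(M,N)$: for every $(M,N)$-wave $W$, $N.W$ has an $M$-independent base. $\mathsf{cond}^+(M,N)$: $W(M,N)$ consists of $M$-loops and $r(N.W(M,N))=0$. A set $I$ independent in both $M$ and $N$ is feasible if $\mathsf{cond}(M/I,N/I)$ holds, and nice feasible if moreover $\mathsf{cond}^+(M/I,N/I)$ holds. *)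

theory Defs
  imports Main
begin

text \<open>A (possibly infinite) matroid is represented by its ground set and its
  family of independent sets. Axioms: (I1)-(I3) plus (IM) of Bruhn et al.\<close>

type_synonym 'a matroid = "'a set \<times> 'a set set"

definition carrier :: "'a matroid \<Rightarrow> 'a set" where
  "carrier M = fst M"

definition indep :: "'a matroid \<Rightarrow> 'a set \<Rightarrow> bool" where
  "indep M I \<longleftrightarrow> I \<in> snd M"

definition maximal_in :: "'a set set \<Rightarrow> 'a set \<Rightarrow> bool" where
  "maximal_in S B \<longleftrightarrow> B \<in> S \<and> (\<forall>J\<in>S. B \<subseteq> J \<longrightarrow> J = B)"

definition base :: "'a matroid \<Rightarrow> 'a set \<Rightarrow> bool" where
  "base M B \<longleftrightarrow> maximal_in {I. indep M I} B"

definition matroid :: "'a matroid \<Rightarrow> bool" where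
  "matroid M \<longleftrightarrow>
     (\<forall>I. indep M I \<longrightarrow> I \<subseteq> carrier M) \<and>
     indep M {} \<and>
     (\<forall>I J. indep M J \<and> I \<subseteq> J \<longrightarrow> indep M I) \<and>
     (\<forall>I J. indep M I \<and> \<not> base M I \<and> base M J \<longrightarrow>
        (\<exists>x \<in> J - I. indep M (insert x I))) \<and>
     (\<forall>I X. indep M I \<and> I \<subseteq> X \<and> X \<subseteq> carrier M \<longrightarrow>
        (\<exists>B. maximal_in {J. indep M J \<and> I \<subseteq> J \<and> J \<subseteq> X} B))"

definition dual :: "'a matroid \<Rightarrow> 'a matroid" where
  "dual M = (carrier M, {I. I \<subseteq> carrier M \<and> (\<exists>B. base M B \<and> I \<inter> B = {})})"

definition restr :: "'a matroid \<Rightarrow> 'a set \<Rightarrow> 'a matroid" where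
  "restr M X = (X, {I. indep M I \<and> I \<subseteq> X})"

definition contract :: "'a matroid \<Rightarrow> 'a set \<Rightarrow> 'a matroid" where
  "contract M X = dual (restr (dual M) (carrier M - X))"

definition contr_to :: "'a matroid \<Rightarrow> 'a set \<Rightarrow> 'a matroid" where
  "contr_to M X = contract M (carrier M - X)"

definition loop :: "'a matroid \<Rightarrow> 'a \<Rightarrow> bool" where
  "loop M e \<longleftrightarrow> e \<in> carrier M \<and> \<not> indep M {e}"

definition wave :: "'a matroid \<Rightarrow> 'a matroid \<Rightarrow> 'a set \<Rightarrow> bool" where
  "wave M N W \<longleftrightarrow> W \<subseteq> carrier M \<and>
     (\<exists>B. base (restr M W) B \<and> indep (contr_to N W) B)"

definition Wave :: "'a matroid \<Rightarrow> 'a matroid \<Rightarrow> 'a set" where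
  "Wave M N = \<Union>{W. wave M N W}"

definition common_bases :: "'a matroid \<Rightarrow> 'a matroid \<Rightarrow> 'a set \<Rightarrow> 'a set set" where
  "common_bases M N X = {B. base (restr M X) B \<and> base (contr_to N X) B}"

definition cond :: "'a matroid \<Rightarrow> 'a matroid \<Rightarrow> bool" where
  "cond M N \<longleftrightarrow> (\<forall>W. wave M N W \<longrightarrow> (\<exists>B. base (contr_to N W) B \<and> indep M B))"

definition cond_plus :: "'a matroid \<Rightarrow> 'a matroid \<Rightarrow> bool" where
  "cond_plus M N \<longleftrightarrow> (\<forall>e \<in> Wave M N. loop M e) \<and> base (contr_to N (Wave M N)) {}"

definition feasible :: "'a matroid \<Rightarrow> 'a matroid \<Rightarrow> 'a set \<Rightarrow> bool" where
  "feasible M N I \<longleftrightarrow> indep M I \<and> indep N I \<and> cond (contract M I) (contract N I)"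

definition nice_feasible :: "'a matroid \<Rightarrow> 'a matroid \<Rightarrow> 'a set \<Rightarrow> bool" where
  "nice_feasible M N I \<longleftrightarrow> feasible M N I \<and> cond_plus (contract M I) (contract N I)"

end

theory Submission
  imports Defs
begin

lemma base_iff: "base K B \<longleftrightarrow> indep K B \<and> (\<forall>J. indep K J \<and> B \<subseteq> J \<longrightarrow> J = B)"
  unfolding base_def maximal_in_def by auto

lemma carrier_dual[simp]: "carrier (dual K) = carrier K"
  unfolding dual_def carrier_def by simp

lemma indep_dual: "indep (dual K) J \<longleftrightarrow> J \<subseteq> carrier K \<and> (\<exists>B. base K B \<and> J \<inter> B = {})"
  unfolding dual_def indep_def by simp

lemma carrier_restr[simp]: "carrier (restr K Y) = Y"
  unfolding restr_def carrier_def by simp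

lemma indep_restr: "indep (restr K Y) J \<longleftrightarrow> indep K J \<and> J \<subseteq> Y"
  unfolding restr_def indep_def by simp

lemma base_restr: "base (restr K Y) C \<longleftrightarrow> maximal_in {J. indep K J \<and> J \<subseteq> Y} C"
proof -
  have "Collect (indep (restr K Y)) = {J. indep K J \<and> J \<subseteq> Y}" by (auto simp: indep_restr)
  thus ?thesis unfolding base_def by simp
qed

lemma carrier_contract[simp]: "carrier (contract K X) = carrier K - X"
  unfolding contract_def by simp

lemma indep_contract_raw: "indep (contract K X) T \<longleftrightarrow> T \<subseteq> carrier K - X \<and>
   (\<exists>C. maximal_in {J. indep (dual K) J \<and> J \<subseteq> carrier K - X} C \<and> T \<inter> C = {})"
  unfolding contract_def by (subst indep_dual, simp add: base_restr)

lemma m_conj1: assumes "matroid K" shows "\<forall>I. indep K I \<longrightarrow> I \<subseteq> carrier K"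
  using assms unfolding matroid_def apply (elim conjE) apply assumption done

lemma m_conj2: assumes "matroid K" shows "indep K {}"
  using assms unfolding matroid_def apply (elim conjE) apply assumption done

lemma m_conj3: assumes "matroid K" shows "\<forall>I J. indep K J \<and> I \<subseteq> J \<longrightarrow> indep K I"
  using assms unfolding matroid_def apply (elim conjE) apply assumption done

lemma m_conj4: assumes "matroid K" shows "\<forall>I J. indep K I \<and> \<not> base K I \<and> base K J \<longrightarrow> (\<exists>x \<in> J - I. indep K (insert x I))"
  using assms unfolding matroid_def apply (elim conjE) apply assumption done

lemma m_conj5: assumes "matroid K" shows "\<forall>I X. indep K I \<and> I \<subseteq> X \<and> X \<subseteq> carrier K \<longrightarrow> (\<exists>B. maximal_in {J. indep K J \<and> I \<subseteq> J \<and> J \<subseteq> X} B)"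
  using assms unfolding matroid_def apply (elim conjE) apply assumption done

lemma m_sub: "matroid K \<Longrightarrow> indep K I \<Longrightarrow> I \<subseteq> carrier K"
  using m_conj1 by blast
lemma m_empty: "matroid K \<Longrightarrow> indep K {}"
  using m_conj2 by blast
lemma m_down: "matroid K \<Longrightarrow> indep K J \<Longrightarrow> I \<subseteq> J \<Longrightarrow> indep K I"
  using m_conj3 by blast
lemma m_aug: "matroid K \<Longrightarrow> indep K I \<Longrightarrow> \<not> base K I \<Longrightarrow> base K J \<Longrightarrow> \<exists>x\<in>J - I. indep K (insert x I)"
  using m_conj4 by blast
lemma m_im: assumes "matroid K" "indep K I" "I \<subseteq> X" "X \<subseteq> carrier K"
  shows "\<exists>B. indep K B \<and> I \<subseteq> B \<and> B \<subseteq> X \<and> (\<forall>J. indep K J \<and> B \<subseteq> J \<and> J \<subseteq> X \<longrightarrow> J = B)"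
proof -
  from m_conj5[OF assms(1)] assms(2-4) obtain B where "maximal_in {J. indep K J \<and> I \<subseteq> J \<and> J \<subseteq> X} B"
    by blast
  hence "indep K B" "I \<subseteq> B" "B \<subseteq> X" "\<forall>J. indep K J \<and> I \<subseteq> J \<and> J \<subseteq> X \<longrightarrow> B \<subseteq> J \<longrightarrow> J = B"
    unfolding maximal_in_def by auto
  thus ?thesis by blast
qed

lemma base_indep: "base K B \<Longrightarrow> indep K B" by (simp add: base_iff)
lemma base_sub: "matroid K \<Longrightarrow> base K B \<Longrightarrow> B \<subseteq> carrier K"
  using m_sub base_indep by blast

definition maxind :: "'a matroid \<Rightarrow> 'a set \<Rightarrow> 'a set \<Rightarrow> bool" where
  "maxind K X Z \<longleftrightarrow> indep K Z \<and> Z \<subseteq> X \<and> (\<forall>J. indep K J \<and> Z \<subseteq> J \<and> J \<subseteq> X \<longrightarrow> J = Z)"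

definition tight :: "'a matroid \<Rightarrow> 'a set \<Rightarrow> 'a set \<Rightarrow> bool" where
  "tight K X S \<longleftrightarrow> S \<subseteq> carrier K - X \<and> (\<exists>B0. base K B0 \<and> B0 - X = S) \<and>
     (\<forall>B. base K B \<and> B \<subseteq> X \<union> S \<longrightarrow> S \<subseteq> B)"

lemma ext_base: assumes "matroid K" "indep K J" "J \<subseteq> Z" "Z \<subseteq> carrier K" "base K B" "B \<subseteq> Z"
  shows "\<exists>B2. base K B2 \<and> J \<subseteq> B2 \<and> B2 \<subseteq> Z"
proof -
  obtain B2 where B2: "indep K B2" "J \<subseteq> B2" "B2 \<subseteq> Z" "\<forall>J'. indep K J' \<and> B2 \<subseteq> J' \<and> J' \<subseteq> Z \<longrightarrow> J' = B2"
    using m_im[OF assms(1-4)] by blast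
  have "base K B2"
  proof (rule ccontr)
    assume "\<not> base K B2"
    then obtain x where "x \<in> B - B2" "indep K (insert x B2)" using m_aug[OF assms(1) B2(1) _ assms(5)] by blast
    moreover have "insert x B2 \<subseteq> Z" using \<open>x \<in> B - B2\<close> assms(6) B2(3) by blast
    ultimately show False using B2(4) by blast
  qed
  thus ?thesis using B2 by blast
qed

lemma ext_to_base: assumes "matroid K" "indep K I" shows "\<exists>B. base K B \<and> I \<subseteq> B"
proof -
  obtain B where B: "indep K B" "I \<subseteq> B" "B \<subseteq> carrier K" "\<forall>J. indep K J \<and> B \<subseteq> J \<and> J \<subseteq> carrier K \<longrightarrow> J = B"
    using m_im[OF assms m_sub[OF assms] order.refl] by blast
  have "base K B" unfolding base_iff using B m_sub[OF assms(1)] by blast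
  thus ?thesis using B by blast
qed

lemma maxind_exists: assumes "matroid K" "X \<subseteq> carrier K" "indep K Z" "Z \<subseteq> X"
  shows "\<exists>Z'. maxind K X Z' \<and> Z \<subseteq> Z'"
  using m_im[OF assms(1,3,4,2)] unfolding maxind_def by blast

lemma base_maxind: "base K B \<Longrightarrow> B \<subseteq> X \<Longrightarrow> maxind K X B"
  unfolding maxind_def base_iff by blast

lemma CC1: assumes "\<forall>I. indep K I \<longrightarrow> I \<subseteq> carrier K"
  and C: "maximal_in {J. indep (dual K) J \<and> J \<subseteq> carrier K - X} C"
  shows "tight K X (carrier K - X - C)"
proof -
  let ?Y = "carrier K - X"
  have Cc: "indep (dual K) C" "C \<subseteq> ?Y" and Cm: "\<And>J. indep (dual K) J \<Longrightarrow> J \<subseteq> ?Y \<Longrightarrow> C \<subseteq> J \<Longrightarrow> J = C"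
    using C unfolding maximal_in_def by auto
  have key: "\<And>B. base K B \<Longrightarrow> B \<inter> C = {} \<Longrightarrow> ?Y - C \<subseteq> B"
  proof
    fix B y assume B: "base K B" "B \<inter> C = {}" and y: "y \<in> ?Y - C"
    show "y \<in> B"
    proof (rule ccontr)
      assume "y \<notin> B"
      hence "indep (dual K) (insert y C)" using B y Cc unfolding indep_dual by blast
      hence "insert y C = C" using Cm y Cc by blast
      thus False using y by blast
    qed
  qed
  obtain B0 where B0: "base K B0" "B0 \<inter> C = {}" using Cc unfolding indep_dual by blast
  have "B0 \<subseteq> carrier K" using assms(1) B0 base_indep by blast
  hence "B0 - X = ?Y - C" using key[OF B0] B0 by blast
  moreover have "\<forall>B. base K B \<and> B \<subseteq> X \<union> (?Y - C) \<longrightarrow> ?Y - C \<subseteq> B"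
  proof (intro allI impI)
    fix B assume "base K B \<and> B \<subseteq> X \<union> (?Y - C)"
    moreover have "B \<inter> C = {}" using calculation Cc by blast
    ultimately show "?Y - C \<subseteq> B" using key by blast
  qed
  ultimately show ?thesis unfolding tight_def using B0 by blast
qed

lemma CC2: assumes "\<forall>I. indep K I \<longrightarrow> I \<subseteq> carrier K" and "tight K X S"
  shows "maximal_in {J. indep (dual K) J \<and> J \<subseteq> carrier K - X} (carrier K - X - S)"
proof -
  obtain B0 where B0: "base K B0" "B0 - X = S" using assms(2) unfolding tight_def by blast
  have S1: "S \<subseteq> carrier K - X" and S3: "\<forall>B. base K B \<and> B \<subseteq> X \<union> S \<longrightarrow> S \<subseteq> B"
    using assms(2) unfolding tight_def by blast+
  have "indep (dual K) (carrier K - X - S)" unfolding indep_dual using B0 by blast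
  moreover have "\<forall>J. indep (dual K) J \<and> J \<subseteq> carrier K - X \<and> carrier K - X - S \<subseteq> J \<longrightarrow> J = carrier K - X - S"
  proof (intro allI impI)
    fix J assume J: "indep (dual K) J \<and> J \<subseteq> carrier K - X \<and> carrier K - X - S \<subseteq> J"
    then obtain B where B: "base K B" "J \<inter> B = {}" unfolding indep_dual by blast
    have "B \<subseteq> carrier K" using assms(1) B base_indep by blast
    hence "B \<subseteq> X \<union> S" using B J by blast
    hence "S \<subseteq> B" using S3 B by blast
    thus "J = carrier K - X - S" using J B by blast
  qed
  ultimately show ?thesis unfolding maximal_in_def by blast
qed

lemma CC: assumes "\<forall>I. indep K I \<longrightarrow> I \<subseteq> carrier K"
  shows "indep (contract K X) T \<longleftrightarrow> T \<subseteq> carrier K - X \<and> (\<exists>S. tight K X S \<and> T \<subseteq> S)"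
proof
  assume "indep (contract K X) T"
  then obtain C where "T \<subseteq> carrier K - X" "maximal_in {J. indep (dual K) J \<and> J \<subseteq> carrier K - X} C" "T \<inter> C = {}"
    unfolding indep_contract_raw by blast
  thus "T \<subseteq> carrier K - X \<and> (\<exists>S. tight K X S \<and> T \<subseteq> S)" using CC1[OF assms] by blast
next
  assume "T \<subseteq> carrier K - X \<and> (\<exists>S. tight K X S \<and> T \<subseteq> S)"
  then obtain S where "T \<subseteq> carrier K - X" "tight K X S" "T \<subseteq> S" by blast
  thus "indep (contract K X) T" unfolding indep_contract_raw using CC2[OF assms] by blast
qed

lemma T1: assumes "matroid K" "X \<subseteq> carrier K" "tight K X S" "maxind K X Z"
  shows "base K (Z \<union> S)"
proof -
  obtain B0 where B0: "base K B0" "B0 - X = S" using assms(3) unfolding tight_def by blast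
  have S1: "S \<subseteq> carrier K - X" and S3: "\<forall>B. base K B \<and> B \<subseteq> X \<union> S \<longrightarrow> S \<subseteq> B"
    using assms(3) unfolding tight_def by blast+
  have Z: "indep K Z" "Z \<subseteq> X" "\<forall>J. indep K J \<and> Z \<subseteq> J \<and> J \<subseteq> X \<longrightarrow> J = Z"
    using assms(4) unfolding maxind_def by blast+
  have "B0 \<subseteq> X \<union> S" using B0 by blast
  then obtain B3 where B3: "base K B3" "Z \<subseteq> B3" "B3 \<subseteq> X \<union> S"
    using ext_base[OF assms(1) Z(1), of "X \<union> S" B0] Z(2) assms(2) S1 B0(1) by blast
  have "indep K (B3 \<inter> X)" using m_down[OF assms(1) base_indep[OF B3(1)]] by blast
  hence "B3 \<inter> X = Z" using Z B3 by blast
  moreover have "S \<subseteq> B3" using S3 B3 by blast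
  ultimately have "B3 = Z \<union> S" using B3(3) Z(2) by blast
  thus ?thesis using B3 by simp
qed

lemma T2: assumes "matroid K" "X \<subseteq> carrier K" "maxind K X Z" "base K (Z \<union> S)" "S \<inter> X = {}"
  shows "tight K X S"
proof -
  have Z: "indep K Z" "Z \<subseteq> X" "\<forall>J. indep K J \<and> Z \<subseteq> J \<and> J \<subseteq> X \<longrightarrow> J = Z"
    using assms(3) unfolding maxind_def by blast+
  have ZS: "Z \<union> S \<subseteq> carrier K" using base_sub[OF assms(1,4)] .
  have "S \<subseteq> carrier K - X" using ZS assms(5) by blast
  moreover have "(Z \<union> S) - X = S" using Z(2) assms(5) by blast
  moreover have "\<forall>B. base K B \<and> B \<subseteq> X \<union> S \<longrightarrow> S \<subseteq> B"
  proof (intro allI impI subsetI)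
    fix B s assume B: "base K B \<and> B \<subseteq> X \<union> S" and s: "s \<in> S"
    show "s \<in> B"
    proof (rule ccontr)
      assume "s \<notin> B"
      hence "B \<subseteq> X \<union> S - {s}" using B by blast
      then obtain B2 where B2: "base K B2" "Z \<subseteq> B2" "B2 \<subseteq> X \<union> S - {s}"
        using ext_base[OF assms(1) Z(1), of "X \<union> S - {s}" B] Z(2) assms(2) ZS B s assms(5) by blast
      have "indep K (B2 \<inter> X)" using m_down[OF assms(1) base_indep[OF B2(1)]] by blast
      hence "B2 \<inter> X = Z" using Z B2 by blast
      hence "B2 \<subseteq> Z \<union> S" using B2 by blast
      hence "Z \<union> S = B2" using B2(1) base_indep[OF assms(4)] unfolding base_iff by blast
      thus False using B2(3) s by blast
    qed
  qed
  ultimately show ?thesis unfolding tight_def using assms(4) by blast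
qed

lemma msub_all: "matroid K \<Longrightarrow> \<forall>I. indep K I \<longrightarrow> I \<subseteq> carrier K"
  using m_sub by blast

lemma CI: assumes "matroid K" "indep K I"
  shows "indep (contract K I) T \<longleftrightarrow> T \<subseteq> carrier K \<and> T \<inter> I = {} \<and> indep K (I \<union> T)"
proof -
  have mI: "maxind K I I" using assms(2) unfolding maxind_def by blast
  have IE: "I \<subseteq> carrier K" by (rule m_sub[OF assms])
  have CCK: "indep (contract K I) T \<longleftrightarrow> T \<subseteq> carrier K - I \<and> (\<exists>S. tight K I S \<and> T \<subseteq> S)"
    by (rule CC[OF msub_all[OF assms(1)]])
  show ?thesis
  proof
    assume h: "indep (contract K I) T"
    then obtain S where S1: "T \<subseteq> carrier K - I" and S2: "tight K I S" and S3: "T \<subseteq> S"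
      unfolding CCK by blast
    have "base K (I \<union> S)" by (rule T1[OF assms(1) IE S2 mI])
    hence "indep K (I \<union> S)" by (rule base_indep)
    moreover have "I \<union> T \<subseteq> I \<union> S" using S3 by blast
    ultimately have "indep K (I \<union> T)" by (rule m_down[OF assms(1)])
    moreover have "T \<subseteq> carrier K" "T \<inter> I = {}" using S1 by blast+
    ultimately show "T \<subseteq> carrier K \<and> T \<inter> I = {} \<and> indep K (I \<union> T)" by blast
  next
    assume h: "T \<subseteq> carrier K \<and> T \<inter> I = {} \<and> indep K (I \<union> T)"
    then obtain B where B1: "base K B" and B2: "I \<union> T \<subseteq> B" using ext_to_base[OF assms(1)] by blast
    have "I \<union> (B - I) = B" using B2 by blast
    hence "base K (I \<union> (B - I))" using B1 by simp
    moreover have "(B - I) \<inter> I = {}" by blast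
    ultimately have t: "tight K I (B - I)" by (rule T2[OF assms(1) IE mI])
    have "T \<subseteq> B - I" using h B2 by blast
    moreover have "T \<subseteq> carrier K - I" using h by blast
    ultimately show "indep (contract K I) T" unfolding CCK using t by blast
  qed
qed

lemma BI: assumes "matroid K" "indep K I"
  shows "base (contract K I) B \<longleftrightarrow> B \<inter> I = {} \<and> base K (I \<union> B)"
proof
  assume "base (contract K I) B"
  hence b1: "indep (contract K I) B" and b2: "\<And>T. indep (contract K I) T \<Longrightarrow> B \<subseteq> T \<Longrightarrow> T = B"
    unfolding base_iff by blast+
  from b1 have B: "B \<subseteq> carrier K" "B \<inter> I = {}" "indep K (I \<union> B)" unfolding CI[OF assms] by blast+
  have "J = I \<union> B" if J: "indep K J" "I \<union> B \<subseteq> J" for J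
  proof -
    have "J \<subseteq> carrier K" by (rule m_sub[OF assms(1) J(1)])
    moreover have "I \<union> (J - I) = J" using J(2) by blast
    ultimately have "indep (contract K I) (J - I)" unfolding CI[OF assms] using J(1) by auto
    moreover have "B \<subseteq> J - I" using J(2) B(2) by blast
    ultimately have "J - I = B" by (rule b2)
    thus "J = I \<union> B" using J(2) by blast
  qed
  hence "base K (I \<union> B)" unfolding base_iff using B(3) by blast
  thus "B \<inter> I = {} \<and> base K (I \<union> B)" using B(2) by blast
next
  assume h: "B \<inter> I = {} \<and> base K (I \<union> B)"
  hence h1: "B \<inter> I = {}" and h2: "base K (I \<union> B)" by blast+
  have "I \<union> B \<subseteq> carrier K" by (rule base_sub[OF assms(1) h2])
  hence b1: "indep (contract K I) B" unfolding CI[OF assms] using h1 base_indep[OF h2] by blast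
  have "T = B" if T: "indep (contract K I) T" "B \<subseteq> T" for T
  proof -
    from T(1) have t1: "indep K (I \<union> T)" "T \<inter> I = {}" unfolding CI[OF assms] by blast+
    have "I \<union> B \<subseteq> I \<union> T" using T(2) by blast
    hence "I \<union> T = I \<union> B" using h2 t1(1) unfolding base_iff by blast
    thus "T = B" using t1(2) h1 by blast
  qed
  thus "base (contract K I) B" unfolding base_iff using b1 by blast
qed

lemma NT: assumes "matroid K" "indep K I" "Y \<subseteq> carrier K - I"
  shows "tight (contract K I) Y S \<longleftrightarrow> tight K (Y \<union> I) S"
proof
  have IE: "I \<subseteq> carrier K" using m_sub assms by blast
  assume t: "tight (contract K I) Y S"
  have S1: "S \<subseteq> carrier K - I - Y" using t unfolding tight_def by simp
  obtain B0 where B0: "base (contract K I) B0" "B0 - Y = S" using t unfolding tight_def by blast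
  have S3: "\<forall>B. base (contract K I) B \<and> B \<subseteq> Y \<union> S \<longrightarrow> S \<subseteq> B" using t unfolding tight_def by blast
  have B0': "B0 \<inter> I = {}" "base K (I \<union> B0)" using B0 BI[OF assms(1,2)] by blast+
  have "(I \<union> B0) - (Y \<union> I) = S" using B0 B0' by blast
  moreover have "\<forall>B. base K B \<and> B \<subseteq> (Y \<union> I) \<union> S \<longrightarrow> S \<subseteq> B"
  proof (intro allI impI subsetI)
    fix B s assume B: "base K B \<and> B \<subseteq> (Y \<union> I) \<union> S" and s: "s \<in> S"
    show "s \<in> B"
    proof (rule ccontr)
      assume "s \<notin> B"
      moreover have "I \<subseteq> (Y \<union> I \<union> S) - {s}" using s S1 by blast
      moreover have "(Y \<union> I \<union> S) - {s} \<subseteq> carrier K" using S1 assms(3) IE by blast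
      ultimately obtain B3 where B3: "base K B3" "I \<subseteq> B3" "B3 \<subseteq> (Y \<union> I \<union> S) - {s}"
        using ext_base[OF assms(1,2), of "(Y \<union> I \<union> S) - {s}" B] B by blast
      have "I \<union> (B3 - I) = B3" using B3 by blast
      hence "base (contract K I) (B3 - I)" using BI[OF assms(1,2)] B3 by auto
      moreover have "B3 - I \<subseteq> Y \<union> S" using B3 by blast
      ultimately have "S \<subseteq> B3 - I" using S3 by blast
      thus False using s B3 by blast
    qed
  qed
  ultimately show "tight K (Y \<union> I) S" unfolding tight_def using S1 B0' by blast
next
  have IE: "I \<subseteq> carrier K" using m_sub assms by blast
  assume t: "tight K (Y \<union> I) S"
  have S1: "S \<subseteq> carrier K - (Y \<union> I)" using t unfolding tight_def by simp
  obtain B1 where B1: "base K B1" "B1 - (Y \<union> I) = S" using t unfolding tight_def by blast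
  have S3: "\<forall>B. base K B \<and> B \<subseteq> (Y \<union> I) \<union> S \<longrightarrow> S \<subseteq> B" using t unfolding tight_def by blast
  have "B1 \<subseteq> Y \<union> I \<union> S" using B1 by blast
  moreover have "Y \<union> I \<union> S \<subseteq> carrier K" using S1 assms(3) IE by blast
  ultimately obtain B2 where B2: "base K B2" "I \<subseteq> B2" "B2 \<subseteq> Y \<union> I \<union> S"
    using ext_base[OF assms(1,2), of "Y \<union> I \<union> S" B1] B1 by blast
  have "S \<subseteq> B2" using S3 B2 by blast
  have "I \<union> (B2 - I) = B2" using B2 by blast
  hence bc: "base (contract K I) (B2 - I)" using BI[OF assms(1,2)] B2 by auto
  have "(B2 - I) - Y = S" using B2 \<open>S \<subseteq> B2\<close> S1 by blast
  moreover have "\<forall>B. base (contract K I) B \<and> B \<subseteq> Y \<union> S \<longrightarrow> S \<subseteq> B"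
  proof (intro allI impI)
    fix B assume B: "base (contract K I) B \<and> B \<subseteq> Y \<union> S"
    hence "base K (I \<union> B)" "B \<inter> I = {}" using BI[OF assms(1,2)] by blast+
    moreover have "I \<union> B \<subseteq> (Y \<union> I) \<union> S" using B by blast
    ultimately have "S \<subseteq> I \<union> B" using S3 by blast
    thus "S \<subseteq> B" using S1 by blast
  qed
  moreover have "S \<subseteq> carrier (contract K I) - Y" using S1 by auto
  ultimately show "tight (contract K I) Y S" unfolding tight_def using bc by blast
qed

lemma NI: assumes "matroid K" "indep K I" "Y \<subseteq> carrier K - I"
  shows "indep (contract (contract K I) Y) T \<longleftrightarrow> indep (contract K (Y \<union> I)) T"
proof -
  have h1: "\<forall>J. indep (contract K I) J \<longrightarrow> J \<subseteq> carrier (contract K I)"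
    using CI[OF assms(1,2)] by auto
  have e: "carrier K - I - Y = carrier K - (Y \<union> I)" by blast
  show ?thesis
    unfolding CC[OF h1] CC[OF msub_all[OF assms(1)]] NT[OF assms] carrier_contract e ..
qed

theorem mainTheorem8:
  fixes M N :: "'a matroid" and E :: "'a set"
  assumes "matroid M" and "matroid N"
    and "carrier M = E" and "carrier N = E"
    and "I \<in> common_bases M N (Wave M N)"
  shows "nice_feasible M N I"
proof -
  let ?W = "Wave M N"
  have WE: "?W \<subseteq> E" unfolding Wave_def wave_def using assms(3) by blast
  from assms(5) have bM: "base (restr M ?W) I" and bN: "base (contr_to N ?W) I"
    unfolding common_bases_def by blast+
  have G1a: "indep M I" and G1b: "I \<subseteq> ?W" and G1c: "\<And>J. indep M J \<Longrightarrow> I \<subseteq> J \<Longrightarrow> J \<subseteq> ?W \<Longrightarrow> J = I"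
    using bM unfolding base_iff indep_restr by blast+
  have mN: "\<forall>J. indep N J \<longrightarrow> J \<subseteq> carrier N" using msub_all[OF assms(2)] .
  have CCN: "\<And>X T. indep (contract N X) T \<longleftrightarrow> T \<subseteq> E - X \<and> (\<exists>S. tight N X S \<and> T \<subseteq> S)"
    using CC[OF mN] assms(4) by simp
  have CIM: "\<And>T. indep (contract M I) T \<longleftrightarrow> T \<subseteq> E \<and> T \<inter> I = {} \<and> indep M (I \<union> T)"
    using CI[OF assms(1) G1a] assms(3) by simp
  have cN: "contr_to N ?W = contract N (E - ?W)" unfolding contr_to_def assms(4) ..
  have bN': "base (contract N (E - ?W)) I" using bN cN by simp
  from base_indep[OF bN'] obtain S where S1: "tight N (E - ?W) S" and S2: "I \<subseteq> S"
    unfolding CCN by blast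
  have "S \<subseteq> carrier N - (E - ?W)" using S1 unfolding tight_def by blast
  hence "indep (contract N (E - ?W)) S" unfolding CCN using S1 assms(4) by blast
  hence "S = I" using bN' S2 unfolding base_iff by blast
  hence G2: "tight N (E - ?W) I" using S1 by simp
  have EWc: "E - ?W \<subseteq> carrier N" using assms(4) by blast
  obtain Z0 where Z0: "maxind N (E - ?W) Z0"
    using maxind_exists[OF assms(2) EWc m_empty[OF assms(2)]] by blast
  have bZ0: "base N (Z0 \<union> I)" by (rule T1[OF assms(2) EWc G2 Z0])
  have indN: "indep N I" using m_down[OF assms(2) base_indep[OF bZ0]] by blast
  have IE: "I \<subseteq> E" using G1b WE by blast
  have Z0W: "Z0 \<subseteq> E - ?W" using Z0 unfolding maxind_def by blast

  have NIN: "indep (contr_to (contract N I) W') T \<longleftrightarrow> indep (contract N (E - W')) T"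
    if W': "W' \<subseteq> E - I" for W' T
  proof -
    have Ysub: "(E - I) - W' \<subseteq> carrier N - I" using assms(4) by blast
    have Yeq: "((E - I) - W') \<union> I = E - W'" using W' IE by blast
    have "indep (contr_to (contract N I) W') T = indep (contract (contract N I) ((E - I) - W')) T"
      unfolding contr_to_def using assms(4) by simp
    also have "\<dots> = indep (contract N (((E - I) - W') \<union> I)) T" by (rule NI[OF assms(2) indN Ysub])
    also have "\<dots> = indep (contract N (E - W')) T" by (simp only: Yeq)
    finally show ?thesis .
  qed

  have K2a: "T = {}" if W': "W' \<subseteq> ?W - I" and T: "indep (contr_to (contract N I) W') T" for W' T
  proof -
    have W'1: "W' \<subseteq> E - I" using W' WE by blast
    have "Z0 \<union> I \<subseteq> E - W'" using Z0W W' IE by blast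
    hence ZI: "maxind N (E - W') (Z0 \<union> I)" by (rule base_maxind[OF bZ0])
    have EW'c: "E - W' \<subseteq> carrier N" using assms(4) by blast
    from T have "indep (contract N (E - W')) T" unfolding NIN[OF W'1] .
    then obtain S where S: "tight N (E - W') S" "T \<subseteq> S" unfolding CCN by blast
    have "base N ((Z0 \<union> I) \<union> S)" by (rule T1[OF assms(2) EW'c S(1) ZI])
    hence "indep N ((Z0 \<union> I) \<union> S)" by (rule base_indep)
    hence "(Z0 \<union> I) \<union> S = Z0 \<union> I" using bZ0 unfolding base_iff by blast
    moreover have "S \<subseteq> W'" using S(1) assms(4) unfolding tight_def by blast
    ultimately have "S = {}" using Z0W W' by blast
    thus "T = {}" using S by blast
  qed
  have K2b: "indep (contr_to (contract N I) W') {}" if W': "W' \<subseteq> ?W - I" for W'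
  proof -
    have W'1: "W' \<subseteq> E - I" using W' WE by blast
    have "Z0 \<union> I \<subseteq> E - W'" using Z0W W' IE by blast
    hence ZI: "maxind N (E - W') (Z0 \<union> I)" by (rule base_maxind[OF bZ0])
    have EW'c: "E - W' \<subseteq> carrier N" using assms(4) by blast
    have "base N ((Z0 \<union> I) \<union> {})" using bZ0 by simp
    moreover have "{} \<inter> (E - W') = {}" by simp
    ultimately have "tight N (E - W') {}" by (rule T2[OF assms(2) EW'c ZI])
    hence "indep (contract N (E - W')) {}" unfolding CCN by blast
    thus ?thesis unfolding NIN[OF W'1] .
  qed

  have K1: "W' \<subseteq> ?W - I" if w: "wave (contract M I) (contract N I) W'" for W'
  proof -
    have W'1: "W' \<subseteq> E - I" using w assms(3) unfolding wave_def by simp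
    obtain B' where B'1: "base (restr (contract M I) W') B'"
      and B'2: "indep (contr_to (contract N I) W') B'" using w unfolding wave_def by blast
    have B'a1: "indep (contract M I) B'" and B'a2: "B' \<subseteq> W'"
      and B'a3: "\<And>T. indep (contract M I) T \<Longrightarrow> B' \<subseteq> T \<Longrightarrow> T \<subseteq> W' \<Longrightarrow> T = B'"
      using B'1 unfolding base_iff indep_restr by blast+
    from B'a1 have B'b1: "B' \<subseteq> E" and B'b2: "B' \<inter> I = {}" and B'b3: "indep M (I \<union> B')"
      unfolding CIM by blast+
    have maxM: "J = I \<union> B'" if J: "indep M J" "J \<subseteq> ?W \<union> W'" "I \<union> B' \<subseteq> J" for J
    proof -
      have "indep M (J \<inter> ?W)" using m_down[OF assms(1) J(1)] by blast
      moreover have "I \<subseteq> J \<inter> ?W" using J(3) G1b by blast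
      moreover have "J \<inter> ?W \<subseteq> ?W" by blast
      ultimately have JW: "J \<inter> ?W = I" by (rule G1c)
      have JE: "J \<subseteq> E" using m_sub[OF assms(1) J(1)] assms(3) by blast
      have "I \<union> (J - I) = J" using J(3) by blast
      hence "indep (contract M I) (J - I)" unfolding CIM using J(1) JE by auto
      moreover have "B' \<subseteq> J - I" using J(3) B'b2 by blast
      moreover have "J - I \<subseteq> W'" using J(2) JW by blast
      ultimately have "J - I = B'" by (rule B'a3)
      thus "J = I \<union> B'" using J(3) by blast
    qed
    have baseM: "base (restr M (?W \<union> W')) (I \<union> B')"
      unfolding base_iff indep_restr using B'b3 G1b B'a2 maxM by blast
    have "indep (contract N (E - W')) B'" using B'2 unfolding NIN[OF W'1] .
    then obtain S' where S'1: "tight N (E - W') S'" and S'2: "B' \<subseteq> S'" unfolding CCN by blast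
    have S'W: "S' \<subseteq> W'" using S'1 assms(4) unfolding tight_def by blast
    define X where "X = E - (?W \<union> W')"
    have Xc: "X \<subseteq> carrier N" unfolding X_def using assms(4) by blast
    obtain Z where Z: "maxind N X Z"
      using maxind_exists[OF assms(2) Xc m_empty[OF assms(2)]] by blast
    have ZX1: "indep N Z" and ZX2: "Z \<subseteq> X" and ZX3: "\<And>J. indep N J \<Longrightarrow> Z \<subseteq> J \<Longrightarrow> J \<subseteq> X \<Longrightarrow> J = Z"
      using Z unfolding maxind_def by blast+
    have "Z \<subseteq> E - ?W" using ZX2 unfolding X_def by blast
    then obtain Z1 where Z1a: "maxind N (E - ?W) Z1" and Z1b: "Z \<subseteq> Z1"
      using maxind_exists[OF assms(2) EWc ZX1] by blast
    have "base N (Z1 \<union> I)" by (rule T1[OF assms(2) EWc G2 Z1a])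
    hence "indep N (Z1 \<union> I)" by (rule base_indep)
    moreover have "Z \<union> I \<subseteq> Z1 \<union> I" using Z1b by blast
    ultimately have iZI: "indep N (Z \<union> I)" by (rule m_down[OF assms(2)])
    have EW'c: "E - W' \<subseteq> carrier N" using assms(4) by blast
    have "Z \<union> I \<subseteq> E - W'" using ZX2 IE W'1 unfolding X_def by blast
    then obtain Z2 where Z2a: "maxind N (E - W') Z2" and Z2b: "Z \<union> I \<subseteq> Z2"
      using maxind_exists[OF assms(2) EW'c iZI] by blast
    have bB: "base N (Z2 \<union> S')" by (rule T1[OF assms(2) EW'c S'1 Z2a])
    have "indep N Z2" using Z2a unfolding maxind_def by blast
    hence "indep N (Z2 \<inter> X)" using m_down[OF assms(2)] by blast
    moreover have "Z \<subseteq> Z2 \<inter> X" using Z2b ZX2 by blast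
    ultimately have "Z2 \<inter> X = Z" using ZX3 by blast
    moreover have "S' \<inter> X = {}" using S'W unfolding X_def by blast
    ultimately have BX: "(Z2 \<union> S') \<inter> X = Z" by blast
    hence "Z \<union> ((Z2 \<union> S') - X) = Z2 \<union> S'" using Z2b by blast
    hence "base N (Z \<union> ((Z2 \<union> S') - X))" using bB by simp
    moreover have "((Z2 \<union> S') - X) \<inter> X = {}" by blast
    ultimately have tX: "tight N X ((Z2 \<union> S') - X)" by (rule T2[OF assms(2) Xc Z])
    have "I \<subseteq> ?W" by (rule G1b)
    hence "I \<union> B' \<subseteq> (Z2 \<union> S') - X" using Z2b S'2 S'W unfolding X_def by blast
    moreover have "I \<union> B' \<subseteq> E - X" using G1b B'a2 WE W'1 unfolding X_def by blast
    ultimately have iX: "indep (contract N X) (I \<union> B')" unfolding CCN using tX by blast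
    have "contr_to N (?W \<union> W') = contract N X"
      unfolding contr_to_def X_def using assms(4) by simp
    hence "indep (contr_to N (?W \<union> W')) (I \<union> B')" using iX by simp
    moreover have "?W \<union> W' \<subseteq> carrier M" using WE W'1 assms(3) by blast
    ultimately have "wave M N (?W \<union> W')" unfolding wave_def using baseM by blast
    hence "?W \<union> W' \<subseteq> ?W" unfolding Wave_def by blast
    thus ?thesis using W'1 by blast
  qed

  have K3: "loop (contract M I) e" if e: "e \<in> ?W - I" for e
  proof -
    have "e \<in> carrier (contract M I)" using e WE assms(3) by auto
    moreover have "\<not> indep (contract M I) {e}"
    proof
      assume "indep (contract M I) {e}"
      hence "indep M (I \<union> {e})" unfolding CIM by blast
      moreover have "I \<subseteq> I \<union> {e}" by blast
      moreover have "I \<union> {e} \<subseteq> ?W" using e G1b by blast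
      ultimately have "I \<union> {e} = I" by (rule G1c)
      thus False using e by blast
    qed
    ultimately show ?thesis unfolding loop_def by blast
  qed

  have K4: "indep (contract M I) {}" unfolding CIM using G1a by simp

  have baseE: "base (contr_to (contract N I) W') {}" if "W' \<subseteq> ?W - I" for W'
    unfolding base_iff using K2a[OF that] K2b[OF that] by blast

  have cond: "cond (contract M I) (contract N I)"
    unfolding cond_def using baseE K1 K4 by blast
  have WS: "Wave (contract M I) (contract N I) \<subseteq> ?W - I"
    unfolding Wave_def[of "contract M I" "contract N I"] using K1 by blast
  have condp: "cond_plus (contract M I) (contract N I)"
    unfolding cond_plus_def using K3 WS baseE[OF WS] by blast
  show ?thesis unfolding nice_feasible_def feasible_def
    using G1a indN cond condp by blast
qed

end
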